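(* Let $N\ge1$ and let $\gamma=\frac{B}{\sum_{j=1}^N C_j}$, where $B,C_1,\dots,C_N$ are mutually independent, $B$ is $\kappa$-$\mu$ shadowed with parameters $(\kappa,\mu,m,\bar x)$ and $C_j$ is $\kappa$-$\mu$ shadowed with parameters $(\kappa_j,\mu_j,m_j,\bar x_j)$. Let $f_\gamma$ and $F_\gamma$ be the density and CDF of $\gamma$. Then $$\lim_{z\to 0^+}\frac{z\,f_\gamma(z)}{F_\gamma(z)}=\mu .$$ Equivalently, the CDF of $\hat\gamma=-\gamma$ belongs to the maximum domain of attraction of the reversed Weibull distribution $\Lambda_2(z)=\exp(-(-z)^{\mu})$ for $z\le0$ (and $1$ for $z>0$).
   Context: A random variable $X$ is $\kappa$-$\mu$ shadowed with parameters $(\kappa,\mu,m,\bar x)$ (with $\kappa\ge 0$, $\mu>0$, $m>0$, $\bar x=\mathbb E[X]>0$) if it has density $$f_X(x)=\frac{x^{\mu-1}}{\theta^{\mu-m}\lambda^{m}\Gamma(\mu)}e^{-x/\theta}\,{}_1F_1\!\left(m;\mu;\frac{x}{\theta}-\frac{x}{\lambda}\right),\quad x\ge0,$$ where ${}_1F_1$ is the confluent hypergeometric function, $\theta=\frac{\bar x}{\mu(1+\kappa)}$ and $\lambda=\frac{(\mu\kappa+m)\bar x}{\mu(1+\kappa)m}$. A CDF $F$ is in the maximum domain of attraction of a distribution $G$ if for i.i.d. samples with CDF $F$ there are constants $a_K>0$, $b_K\in\mathbb R$ with $a_K^{-1}(\max_{k\le K}z_k-b_K)$ converging in distribution to $G$.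 *)

theory Defs
  imports "HOL-Probability.Probability"
begin

definition hyp1F1 :: "real \<Rightarrow> real \<Rightarrow> real \<Rightarrow> real" where
  "hyp1F1 a b z = (\<Sum>n. pochhammer a n / pochhammer b n * z ^ n / fact n)"

definition kms_theta :: "real \<Rightarrow> real \<Rightarrow> real \<Rightarrow> real" where
  "kms_theta \<kappa> \<mu> xb = xb / (\<mu> * (1 + \<kappa>))"

definition kms_lambda :: "real \<Rightarrow> real \<Rightarrow> real \<Rightarrow> real \<Rightarrow> real" where
  "kms_lambda \<kappa> \<mu> m xb = (\<mu> * \<kappa> + m) * xb / (\<mu> * (1 + \<kappa>) * m)"

definition kms_pdf :: "real \<Rightarrow> real \<Rightarrow> real \<Rightarrow> real \<Rightarrow> real \<Rightarrow> real" where
  "kms_pdf \<kappa> \<mu> m xb x =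
     (if x < 0 then 0 else
      (let th = kms_theta \<kappa> \<mu> xb; la = kms_lambda \<kappa> \<mu> m xb in
        x powr (\<mu> - 1) / (th powr (\<mu> - m) * la powr m * Gamma \<mu>)
        * exp (- x / th) * hyp1F1 m \<mu> (x / th - x / la)))"

end

theory Submission
  imports Defs
begin

lemma poch_ratio_bound:
  fixes a b r :: real
  assumes a: "a > 0" and b: "b > 0" and r: "r > 1"
  shows "\<exists>C>0. \<forall>n. pochhammer a n / pochhammer b n \<le> C * r ^ n"
proof -
  obtain K :: nat where K: "(a - b) / (r - 1) \<le> real K" using real_arch_simple by blast
  define Mx where "Mx = max 1 (a / b)"
  have Mx1: "Mx \<ge> 1" unfolding Mx_def by simp
  have q1: "(a + real k) / (b + real k) \<le> Mx" for k
  proof (cases "a \<le> b")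
    case True
    then have "(a + real k) / (b + real k) \<le> 1" using b by (simp add: divide_le_eq)
    then show ?thesis unfolding Mx_def by linarith
  next
    case False
    have "(a + real k) / (b + real k) \<le> a / b" using a b False
      by (simp add: divide_simps) (simp add: algebra_simps mult_right_mono)
    then show ?thesis unfolding Mx_def by linarith
  qed
  have q2: "(a + real k) / (b + real k) \<le> r" if "k \<ge> K" for k
  proof -
    have "(a - b) \<le> (r - 1) * real K" using K r by (simp add: divide_le_eq mult.commute)
    also have "\<dots> \<le> (r - 1) * real k" using that r by (intro mult_left_mono) auto
    finally have "a + real k \<le> r * (b + real k)" using r b
      by (simp add: algebra_simps) (smt (verit) mult_le_cancel_right1 mult.commute)
    then show ?thesis using b by (simp add: divide_le_eq)
  qed
  have pos: "pochhammer b n > 0" for n using b by (simp add: pochhammer_pos)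
  have main: "pochhammer a n / pochhammer b n \<le> Mx ^ (min n K) * r ^ n" for n
  proof (induction n)
    case 0 then show ?case by simp
  next
    case (Suc n)
    have eq: "pochhammer a (Suc n) / pochhammer b (Suc n)
        = (pochhammer a n / pochhammer b n) * ((a + real n) / (b + real n))"
      by (simp add: pochhammer_Suc)
    have nn: "0 \<le> (a + real n) / (b + real n)" using a b by simp
    have nn2: "0 \<le> Mx ^ (min n K) * r ^ n" using Mx1 r by simp
    show ?case
    proof (cases "n < K")
      case True
      have "pochhammer a (Suc n) / pochhammer b (Suc n) \<le> (Mx ^ (min n K) * r ^ n) * Mx"
        unfolding eq by (rule mult_mono[OF Suc q1 nn2 nn])
      also have "\<dots> \<le> Mx ^ (min (Suc n) K) * r ^ Suc n"
        using True Mx1 r by (simp add: algebra_simps)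
      finally show ?thesis .
    next
      case False
      have "pochhammer a (Suc n) / pochhammer b (Suc n) \<le> (Mx ^ (min n K) * r ^ n) * r"
        unfolding eq by (rule mult_mono[OF Suc q2 nn2 nn]) (use False in auto)
      also have "\<dots> = Mx ^ (min (Suc n) K) * r ^ Suc n"
        using False by (simp add: algebra_simps min_def)
      finally show ?thesis .
    qed
  qed
  show ?thesis
  proof (intro exI[of _ "Mx ^ K"] conjI allI)
    show "Mx ^ K > 0" using Mx1 by simp
    fix n
    have "Mx ^ (min n K) \<le> Mx ^ K" using Mx1 by (intro power_increasing) auto
    then have "Mx ^ (min n K) * r ^ n \<le> Mx ^ K * r ^ n" using r by (intro mult_right_mono) auto
    with main[of n] show "pochhammer a n / pochhammer b n \<le> Mx ^ K * r ^ n" by linarith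
  qed
qed


lemma aux_div_swap: "(p::real) * w / f = p / f * w"
  by (simp add: divide_inverse mult_ac)

lemma hyp_coeff_eq: "(\<lambda>n. pochhammer (a::real) n / pochhammer b n * (z::real) ^ n / fact n)
   = (\<lambda>n. (pochhammer a n / pochhammer b n / fact n) * z ^ n)"
  by (intro ext) (rule aux_div_swap)

lemma hyp1F1_bound:
  fixes a b r y :: real
  assumes a: "a > 0" and b: "b > 0" and r: "r > 1"
  obtains C where "C > 0" "\<And>y. y \<ge> 0 \<Longrightarrow> summable (\<lambda>n. pochhammer a n / pochhammer b n * y ^ n / fact n)"
    "\<And>y. y \<ge> 0 \<Longrightarrow> 0 \<le> hyp1F1 a b y \<and> hyp1F1 a b y \<le> C * exp (r * y)"
proof -
  obtain C where C: "C > 0" "\<And>n. pochhammer a n / pochhammer b n \<le> C * r ^ n"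
    using poch_ratio_bound[OF a b r] by blast
  have nn: "0 \<le> pochhammer a n / pochhammer b n * y ^ n / fact n" if "y \<ge> 0" for n y
    using a b that by (simp add: pochhammer_pos less_imp_le)
  have le: "pochhammer a n / pochhammer b n * y ^ n / fact n \<le> C * (inverse (fact n) * (r * y) ^ n)"
    if "y \<ge> 0" for n y
  proof -
    have "pochhammer a n / pochhammer b n * y ^ n \<le> (C * r ^ n) * y ^ n"
      using C(2)[of n] that by (intro mult_right_mono) auto
    then show ?thesis by (simp add: divide_right_mono power_mult_distrib field_simps)
  qed
  have sumE: "summable (\<lambda>n. C * (inverse (fact n) * (r * y) ^ n))" for y :: real
    by (intro summable_mult summable_exp)
  have sm: "summable (\<lambda>n. pochhammer a n / pochhammer b n * y ^ n / fact n)" if "y \<ge> 0" for y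
  proof (rule summable_comparison_test'[OF sumE[of y]])
    fix n
    show "norm (pochhammer a n / pochhammer b n * y ^ n / fact n) \<le> C * (inverse (fact n) * (r * y) ^ n)"
      using nn[of y n] le[of y n] that by (simp only: real_norm_def abs_of_nonneg)
  qed
  show ?thesis
  proof (rule that[OF C(1) sm])
    fix y :: real assume y: "y \<ge> 0"
    have "0 \<le> hyp1F1 a b y" unfolding hyp1F1_def by (intro suminf_nonneg sm y nn)
    moreover have "hyp1F1 a b y \<le> (\<Sum>n. C * (inverse (fact n) * (r * y) ^ n))"
      unfolding hyp1F1_def by (intro suminf_le sm y sumE le)
    moreover have "(\<Sum>n. C * (inverse (fact n) * (r * y) ^ n)) = C * exp (r * y)"
    proof -
      have "(\<lambda>n. inverse (fact n) * (r*y)^n) sums exp (r*y)"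
        using exp_converges[of "r*y"] by (simp add: scaleR_conv_of_real divide_inverse mult.commute)
      then show ?thesis by (simp add: suminf_mult summable_exp sums_unique[symmetric])
    qed
    ultimately show "0 \<le> hyp1F1 a b y \<and> hyp1F1 a b y \<le> C * exp (r * y)" by simp
  qed
qed

lemma hyp1F1_isCont:
  fixes a b :: real assumes a: "a > 0" and b: "b > 0"
  shows "isCont (hyp1F1 a b) y"
proof -
  obtain C where "C > 0" and sm: "\<And>y. y \<ge> 0 \<Longrightarrow> summable (\<lambda>n. pochhammer a n / pochhammer b n * y ^ n / fact n)"
    and "\<And>y. y \<ge> 0 \<Longrightarrow> 0 \<le> hyp1F1 a b y \<and> hyp1F1 a b y \<le> C * exp (2 * y)"
    by (rule hyp1F1_bound[OF a b, of 2]) auto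
  have "summable (\<lambda>n. (pochhammer a n / pochhammer b n / fact n) * (\<bar>y\<bar>+1) ^ n)"
    using sm[of "\<bar>y\<bar>+1"] by (simp add: hyp_coeff_eq)
  then have "isCont (\<lambda>x. \<Sum>n. (pochhammer a n / pochhammer b n / fact n) * x ^ n) y"
    by (rule isCont_powser) auto
  then show ?thesis unfolding hyp1F1_def hyp_coeff_eq .
qed

lemma hyp1F1_0: "hyp1F1 a b 0 = 1"
  unfolding hyp1F1_def hyp_coeff_eq by (subst powser_zero) simp


lemma kms_struct:
  fixes \<kappa> \<mu> m xb :: real
  assumes k: "\<kappa> \<ge> 0" and mu: "\<mu> > 0" and m: "m > 0" and xb: "xb > 0"
  obtains h C \<delta> where
    "\<And>x. kms_pdf \<kappa> \<mu> m xb x = (if x \<le> 0 then 0 else x powr (\<mu> - 1) * h x)"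
    "\<And>x. isCont h x"
    "\<And>x. x \<ge> 0 \<Longrightarrow> 0 \<le> h x \<and> h x \<le> C * exp (- \<delta> * x)"
    "h 0 > 0" "\<delta> > 0" "C > 0"
proof -
  define th where "th = kms_theta \<kappa> \<mu> xb"
  define la where "la = kms_lambda \<kappa> \<mu> m xb"
  define q where "q = m / (\<mu> * \<kappa> + m)"
  have th: "th > 0" unfolding th_def kms_theta_def using k mu xb by simp
  have mk: "\<mu> * \<kappa> + m > 0" using k mu m by (simp add: add_nonneg_pos)
  have q0: "q > 0" and q1: "q \<le> 1" unfolding q_def using mk m k mu by (auto simp: divide_le_eq)
  have la: "1 / la = q / th" unfolding la_def th_def q_def kms_theta_def kms_lambda_def
    using mk m mu k xb by (simp add: field_simps)
  have lapos: "la > 0" using la q0 th by (metis divide_pos_pos zero_less_divide_1_iff)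
  define D where "D = th powr (\<mu> - m) * la powr m * Gamma \<mu>"
  have D: "D > 0" unfolding D_def using th lapos mu by (simp add: Gamma_real_pos)
  define h where "h x = exp (- x / th) * hyp1F1 m \<mu> (x / th - x / la) / D" for x
  have arg: "x / th - x / la = (1 - q) / th * x" for x
  proof -
    have "x / la = x * (1 / la)" by simp
    also have "\<dots> = x * (q / th)" by (simp only: la)
    finally show ?thesis using th by (simp add: field_simps)
  qed
  define r where "r = 1 + q / 2"
  have r1: "r > 1" unfolding r_def using q0 by simp
  obtain C0 where C0: "C0 > 0"
    "\<And>y. y \<ge> 0 \<Longrightarrow> 0 \<le> hyp1F1 m \<mu> y \<and> hyp1F1 m \<mu> y \<le> C0 * exp (r * y)"
    by (rule hyp1F1_bound[OF m mu r1]) auto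
  define \<delta> where "\<delta> = (1 - r * (1 - q)) / th"
  have \<delta>: "\<delta> > 0"
  proof -
    have e: "1 - r*(1-q) = q/2 + q*q/2" unfolding r_def by (simp add: field_simps)
    have "q/2+q*q/2 > 0" using q0 by (simp add: add_pos_pos)
    then show ?thesis unfolding \<delta>_def using th e by simp
  qed
  show ?thesis
  proof (rule that[of h "C0 / D" \<delta>])
    fix x
    show "kms_pdf \<kappa> \<mu> m xb x = (if x \<le> 0 then 0 else x powr (\<mu> - 1) * h x)"
      unfolding kms_pdf_def h_def Let_def th_def[symmetric] la_def[symmetric] D_def[symmetric]
      by (auto simp: field_simps)
  next
    fix x
    show "isCont h x" unfolding h_def
      by (intro continuous_intros isCont_o2[OF _ hyp1F1_isCont[OF m mu]]) (use D th lapos in auto)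
  next
    fix x :: real assume x: "x \<ge> 0"
    have y: "(1 - q) / th * x \<ge> 0" using x q1 th by simp
    have "0 \<le> h x" unfolding h_def arg using C0(2)[OF y] D by simp
    moreover have "h x \<le> C0 / D * exp (- \<delta> * x)"
    proof -
      have "exp (- x / th) * hyp1F1 m \<mu> ((1 - q) / th * x) \<le> exp (- x / th) * (C0 * exp (r * ((1 - q) / th * x)))"
        using C0(2)[OF y] by (intro mult_left_mono) auto
      also have "\<dots> = C0 * exp (- \<delta> * x)"
        unfolding \<delta>_def using th by (simp add: exp_add[symmetric] field_simps)
      finally show ?thesis unfolding h_def arg using D by (simp add: divide_right_mono field_simps)
    qed
    ultimately show "0 \<le> h x \<and> h x \<le> C0 / D * exp (- \<delta> * x)" by simp
  next
    show "h 0 > 0" unfolding h_def using D by (simp add: hyp1F1_0)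
  qed (use \<delta> C0 D in auto)
qed


lemma powr_exp_bound:
  fixes A c x :: real
  assumes A: "A > 0" and c: "c > 0" and x: "x \<ge> 0"
  shows "x powr A * exp (- c * x) \<le> (A / c) powr A"
proof -
  have "c * x / A \<le> exp (c * x / A)" using exp_ge_add_one_self[of "c*x/A"] by linarith
  then have "x \<le> (A / c) * exp (c * x / A)" using A c by (simp add: field_simps)
  then have "x powr A \<le> ((A / c) * exp (c * x / A)) powr A" using x A by (intro powr_mono2) auto
  also have "\<dots> = (A / c) powr A * exp (c * x / A) powr A"
    using A c by (intro powr_mult)
  also have "exp (c * x / A) powr A = exp (c * x)" using A by (simp add: powr_def)
  finally have "x powr A \<le> (A / c) powr A * exp (c * x)" .
  then have "x powr A * exp (- c * x) \<le> (A / c) powr A * exp (c * x) * exp (- c * x)"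
    by (intro mult_right_mono) auto
  also have "\<dots> = (A / c) powr A" by (simp add: exp_minus field_simps)
  finally show ?thesis .
qed

lemma integrable_exp_neg:
  fixes c :: real assumes c: "c > 0"
  shows "integrable lborel (\<lambda>x. indicator {0..} x * exp (- c * x))"
proof -
  have ps: "prob_space (density lborel (exponential_density c))"
    by (rule prob_space_exponential_density[OF c])
  have m: "exponential_density c \<in> borel_measurable borel"
    by (simp add: exponential_density_def)
  interpret P: prob_space "density lborel (\<lambda>x. ennreal (exponential_density c x))" by (rule ps)
  have "integrable (density lborel (\<lambda>x. ennreal (exponential_density c x))) (\<lambda>_. 1::real)"
    by simp
  then have "integrable lborel (\<lambda>x. exponential_density c x *\<^sub>R (1::real))"
    by (subst (asm) integrable_density) (use m exponential_density_nonneg[OF c] in auto)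
  then have "integrable lborel (\<lambda>x. (1/c) * exponential_density c x)" by simp
  also have "(\<lambda>x. (1/c) * exponential_density c x) = (\<lambda>x. indicator {0..} x * exp (- c * x))"
    using c by (auto simp: fun_eq_iff exponential_density_def indicator_def mult.commute)
  finally show ?thesis .
qed


lemma kms_var_facts:
  fixes X :: "'a \<Rightarrow> real" and f h :: "real \<Rightarrow> real" and M :: "'a measure"
  assumes M: "prob_space M"
   and d: "distributed M lborel X (\<lambda>x. ennreal (f x))"
   and fh: "\<And>x. f x = (if x \<le> 0 then 0 else x powr (\<mu> - 1) * h x)"
   and hb: "\<And>x. x \<ge> 0 \<Longrightarrow> 0 \<le> h x \<and> h x \<le> C * exp (- \<delta> * x)"
   and mu: "\<mu> > 0" and de: "\<delta> > 0" and C: "C > 0"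
  shows "AE \<omega> in M. X \<omega> > 0" and "\<And>p. p \<ge> 0 \<Longrightarrow> integrable M (\<lambda>\<omega>. X \<omega> powr p)"
proof -
  have fnn: "0 \<le> f x" for x using hb[of x] by (auto simp: fh)
  have fm[measurable]: "f \<in> borel_measurable borel"
    using distributed_real_measurable[OF _ d] fnn by simp
  have Xm[measurable]: "X \<in> measurable M lborel" using d by (rule distributed_measurable)
  have fem: "(\<lambda>x. ennreal (f x)) \<in> borel_measurable lborel" by measurable
  have eq: "distr M lborel X = density lborel (\<lambda>x. ennreal (f x))"
    by (rule distributed_distr_eq_density[OF d])
  have "AE x in distr M lborel X. x > 0"
    unfolding eq by (subst AE_density[OF fem]) (auto simp: fh)
  then show "AE \<omega> in M. X \<omega> > 0" by (rule AE_distrD[OF Xm])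
  fix p :: real assume p: "p \<ge> 0"
  have fint: "integrable lborel f"
  proof -
    interpret prob_space M by (rule M)
    have "integrable M (\<lambda>_. 1::real)" by simp
    then have "integrable lborel (\<lambda>x. f x * 1)"
      using distributed_integrable[OF d, of "\<lambda>_. 1"] fnn by simp
    then show ?thesis by simp
  qed
  define c where "c = \<delta> / 2"
  have c: "c > 0" unfolding c_def using de by simp
  define K where "K = ((\<mu> + p) / c) powr (\<mu> + p)"
  define b where "b x = f x + C * K * (indicator {0..} x * exp (- c * x))" for x
  have bint: "integrable lborel b" unfolding b_def
    using integrable_exp_neg[OF c] by (intro Bochner_Integration.integrable_add fint) simp
  have "integrable lborel (\<lambda>x. f x * x powr p)"
  proof (rule Bochner_Integration.integrable_bound[OF bint])
    show "(\<lambda>x. f x * x powr p) \<in> borel_measurable lborel" by measurable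
    show "AE x in lborel. norm (f x * x powr p) \<le> norm (b x)"
    proof (intro AE_I2)
      fix x :: real
      have K0: "K \<ge> 0" unfolding K_def by simp
      have bnn: "0 \<le> C * K * (indicator {0..} x * exp (- c * x))" using C K0 by simp
      have "f x * x powr p \<le> b x"
      proof (cases "x \<le> 1")
        case True
        have "x powr p \<le> 1" if "x > 0" using that True p powr_mono2[of p x 1] by simp
        then have "f x * x powr p \<le> f x"
        proof (cases "x > 0")
          case True
          then show ?thesis using \<open>x > 0 \<Longrightarrow> x powr p \<le> 1\<close> fnn[of x]
            mult_left_mono[of "x powr p" 1 "f x"] by simp
        qed (simp add: fh)
        then show ?thesis unfolding b_def using bnn by linarith
      next
        case False
        then have x1: "x > 1" by simp
        have hx: "0 \<le> h x" "h x \<le> C * exp (- \<delta> * x)" using hb[of x] x1 by auto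
        have "f x * x powr p = x powr (\<mu> - 1 + p) * h x" using x1 by (simp add: fh powr_add)
        also have "\<dots> \<le> x powr (\<mu> + p) * (C * exp (- \<delta> * x))"
          using x1 hx by (intro mult_mono powr_mono) auto
        also have "\<dots> = C * (x powr (\<mu> + p) * exp (- c * x)) * exp (- c * x)"
          unfolding c_def by (simp add: exp_add[symmetric] field_simps)
        also have "\<dots> \<le> C * K * exp (- c * x)"
          unfolding K_def using C x1 mu p c
          by (intro mult_right_mono mult_left_mono powr_exp_bound) auto
        finally show ?thesis unfolding b_def using x1 fnn[of x] by simp
      qed
      moreover have "0 \<le> f x * x powr p" using fnn[of x] by simp
      moreover have "0 \<le> b x" unfolding b_def using bnn fnn[of x] by simp
      ultimately show "norm (f x * x powr p) \<le> norm (b x)" by simp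
    qed
  qed
  then show "integrable M (\<lambda>\<omega>. X \<omega> powr p)"
    using distributed_integrable[OF d, of "\<lambda>x. x powr p"] fnn by simp
qed


lemma dist_integrable:
  fixes X :: "'a \<Rightarrow> real" and f :: "real \<Rightarrow> real" and M :: "'a measure"
  assumes M: "prob_space M" and d: "distributed M lborel X (\<lambda>x. ennreal (f x))"
    and fnn: "\<And>x. 0 \<le> f x"
  shows "integrable lborel f"
proof -
  interpret prob_space M by (rule M)
  have "integrable M (\<lambda>_. 1::real)" by simp
  then have "integrable lborel (\<lambda>x. f x * 1)"
    using distributed_integrable[OF d, of "\<lambda>_. 1"] fnn by simp
  then show ?thesis by simp
qed

lemma dist_interval:
  fixes X :: "'a \<Rightarrow> real" and f :: "real \<Rightarrow> real" and M :: "'a measure"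
  assumes M: "prob_space M" and d: "distributed M lborel X (\<lambda>x. ennreal (f x))"
    and fnn: "\<And>x. 0 \<le> f x" and ax: "a \<le> x"
  shows "measure M {\<omega>\<in>space M. X \<omega> \<le> x} = measure M {\<omega>\<in>space M. X \<omega> \<le> a} + (LBINT t=a..x. f t)"
proof -
  interpret prob_space M by (rule M)
  have fm[measurable]: "f \<in> borel_measurable borel"
    using distributed_real_measurable[OF _ d] fnn by simp
  have Xm[measurable]: "X \<in> measurable M borel" using distributed_measurable[OF d] by simp
  have fint: "integrable lborel f" by (rule dist_integrable[OF M d fnn])
  define A where "A = {a<..x}"
  have Asets: "A \<in> sets lborel" unfolding A_def by simp
  have "emeasure M (X -` A \<inter> space M) = (\<integral>\<^sup>+t. ennreal (f t) * indicator A t \<partial>lborel)"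
    by (rule distributed_emeasure[OF d Asets])
  also have "\<dots> = (\<integral>\<^sup>+t. ennreal (f t * indicator A t) \<partial>lborel)"
    by (intro nn_integral_cong) (auto simp: indicator_def)
  also have "\<dots> = ennreal (\<integral>t. f t * indicator A t \<partial>lborel)"
    by (intro nn_integral_eq_integral integrable_real_mult_indicator Asets fint AE_I2)
       (auto simp: fnn indicator_def)
  finally have e: "emeasure M (X -` A \<inter> space M) = ennreal (\<integral>t. f t * indicator A t \<partial>lborel)" .
  have i: "(\<integral>t. f t * indicator A t \<partial>lborel) = (LBINT t=a..x. f t)"
    unfolding interval_integral_Ioc[OF ax] set_lebesgue_integral_def A_def
    by (intro Bochner_Integration.integral_cong) (auto simp: mult.commute)
  have nn: "0 \<le> (\<integral>t. f t * indicator A t \<partial>lborel)"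
    by (intro integral_nonneg_AE AE_I2) (auto simp: fnn indicator_def)
  have mA: "measure M (X -` A \<inter> space M) = (LBINT t=a..x. f t)"
    using e nn i by (simp add: measure_def)
  have un: "{\<omega>\<in>space M. X \<omega> \<le> x} = {\<omega>\<in>space M. X \<omega> \<le> a} \<union> (X -` A \<inter> space M)"
    unfolding A_def using ax by auto
  have "measure M {\<omega>\<in>space M. X \<omega> \<le> x} = measure M {\<omega>\<in>space M. X \<omega> \<le> a} + measure M (X -` A \<inter> space M)"
  proof -
    have s1: "{\<omega>\<in>space M. X \<omega> \<le> a} \<in> sets M" by measurable
    have s2: "X -` A \<inter> space M \<in> sets M" using Xm Asets by (intro measurable_sets) auto
    have dj: "{\<omega>\<in>space M. X \<omega> \<le> a} \<inter> (X -` A \<inter> space M) = {}" unfolding A_def by auto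
    show ?thesis unfolding un by (rule finite_measure_Union[OF s1 s2 dj])
  qed
  then show ?thesis using mA by simp
qed

lemma cdf_deriv:
  fixes X :: "'a \<Rightarrow> real" and f :: "real \<Rightarrow> real" and M :: "'a measure"
  assumes M: "prob_space M" and d: "distributed M lborel X (\<lambda>x. ennreal (f x))"
    and fnn: "\<And>x. 0 \<le> f x" and ab: "a < x0" "x0 < b" and cf: "continuous_on {a..b} f"
  shows "((\<lambda>x. measure M {\<omega>\<in>space M. X \<omega> \<le> x}) has_real_derivative f x0) (at x0)"
proof -
  have FT: "((\<lambda>u. LBINT y=a..u. f y) has_vector_derivative f x0) (at x0 within {a..b})"
    by (rule interval_integral_FTC2[OF _ _ cf]) (use ab in auto)
  have eq: "at x0 within {a..b} = at x0" by (rule at_within_interior) (use ab in simp)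
  have L: "((\<lambda>u. LBINT y=a..u. f y) has_real_derivative f x0) (at x0)"
    using FT unfolding has_real_derivative_iff_has_vector_derivative eq .
  have D: "((\<lambda>u. measure M {\<omega>\<in>space M. X \<omega> \<le> a} + (LBINT y=a..u. f y)) has_real_derivative f x0) (at x0)"
    using DERIV_add[OF DERIV_const[of "measure M {\<omega>\<in>space M. X \<omega> \<le> a}"] L] by simp
  show ?thesis
  proof (rule has_field_derivative_transform_within_open[OF D, of "{a<..<b}"])
    fix x assume "x \<in> {a<..<b}"
    then have "a \<le> x" by simp
    from dist_interval[OF M d fnn this] show "measure M {\<omega>\<in>space M. X \<omega> \<le> a} + (LBINT y=a..x. f y) = measure M {\<omega>\<in>space M. X \<omega> \<le> x}"
      by simp
  qed (use ab in auto)
qed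


lemma dom_conv_at:
  fixes s :: "real \<Rightarrow> 'b \<Rightarrow> real" and w f :: "'b \<Rightarrow> real" and Q :: "'b measure"
  assumes sm: "\<And>t. s t \<in> borel_measurable Q" and fm: "f \<in> borel_measurable Q"
    and w: "integrable Q w"
    and lim: "AE x in Q. ((\<lambda>t. s t x) \<longlongrightarrow> f x) (at a within S)"
    and bound: "eventually (\<lambda>t. AE x in Q. norm (s t x) \<le> w x) (at a within S)"
  shows "((\<lambda>t. integral\<^sup>L Q (s t)) \<longlongrightarrow> integral\<^sup>L Q f) (at a within S)"
  unfolding tendsto_at_iff_sequentially
proof (intro allI impI)
  fix X :: "nat \<Rightarrow> real" assume XS: "\<forall>i. X i \<in> S - {a}" and Xa: "X \<longlonglongrightarrow> a"
  have XF: "filterlim X (at a within S) sequentially" using XS Xa by (auto simp: filterlim_at)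
  from filterlim_iff[THEN iffD1, OF XF, rule_format, OF bound]
  obtain N where N: "\<And>n. N \<le> n \<Longrightarrow> AE x in Q. norm (s (X n) x) \<le> w x"
    by (auto simp: eventually_sequentially)
  show "((\<lambda>t. integral\<^sup>L Q (s t)) \<circ> X) \<longlonglongrightarrow> integral\<^sup>L Q f"
    unfolding comp_def
  proof (rule LIMSEQ_offset[of _ N], rule integral_dominated_convergence[OF fm sm w])
    show "AE x in Q. (\<lambda>n. s (X (n + N)) x) \<longlonglongrightarrow> f x"
      using lim
    proof eventually_elim
      fix x assume "((\<lambda>t. s t x) \<longlongrightarrow> f x) (at a within S)"
      then have "(\<lambda>n. s (X n) x) \<longlonglongrightarrow> f x" by (rule filterlim_compose[OF _ XF])
      then show "(\<lambda>n. s (X (n + N)) x) \<longlonglongrightarrow> f x" by (rule LIMSEQ_ignore_initial_segment)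
    qed
    show "AE x in Q. norm (s (X (n + N)) x) \<le> w x" for n by (rule N) simp
  qed
qed


lemma FB_mvt:
  fixes FB fB hB :: "real \<Rightarrow> real" and \<mu> :: real
  assumes FBd: "\<And>x. x > 0 \<Longrightarrow> (FB has_real_derivative fB x) (at x)"
    and fBh: "\<And>x. x > 0 \<Longrightarrow> fB x = x powr (\<mu> - 1) * hB x"
    and FBneg: "\<And>y. y \<le> 0 \<Longrightarrow> FB y = 0"
    and FBc: "continuous (at_right 0) FB"
    and mu: "\<mu> > 0" and x: "x > 0"
  shows "\<exists>\<xi>. 0 < \<xi> \<and> \<xi> < x \<and> FB x = x powr \<mu> * hB \<xi> / \<mu>"
proof -
  have cont0: "isCont FB 0"
  proof -
    have L: "(FB \<longlongrightarrow> FB 0) (at_left 0)"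
    proof (rule tendsto_eventually)
      show "\<forall>\<^sub>F y in at_left 0. FB y = FB 0"
        by (rule eventually_mono[OF eventually_at_left_real[of "-1" 0]]) (auto simp: FBneg)
    qed
    then have "continuous (at_left 0) FB" by (simp add: continuous_within)
    then show ?thesis using FBc by (simp add: continuous_at_split)
  qed
  have isc: "isCont FB y" if "y \<ge> 0" for y
  proof (cases "y = 0")
    case True then show ?thesis using cont0 by simp
  next
    case False then show ?thesis using that FBd[of y] by (auto intro: DERIV_isCont)
  qed
  define \<phi> where "\<phi> y = FB y * x powr \<mu> - y powr \<mu> * FB x" for y
  have c\<phi>: "continuous_on {0..x} \<phi>" unfolding \<phi>_def
    using isc mu by (intro continuous_intros continuous_on_powr' continuous_at_imp_continuous_on) auto
  have D\<phi>: "(\<phi> has_real_derivative (fB y * x powr \<mu> - \<mu> * y powr (\<mu> - 1) * FB x)) (at y)" if "y > 0" for y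
    unfolding \<phi>_def using that FBd[OF that]
    by (auto intro!: derivative_eq_intros simp: algebra_simps)
  obtain l \<xi> where \<xi>: "0 < \<xi>" "\<xi> < x" and Dl: "DERIV \<phi> \<xi> :> l" and e: "\<phi> x - \<phi> 0 = (x - 0) * l"
    using MVT[OF x c\<phi>] D\<phi> by (metis real_differentiable_def)
  have "\<phi> x = 0" "\<phi> 0 = 0" unfolding \<phi>_def using FBneg[of 0] by auto
  with e x have l0: "l = 0" by simp
  have "l = fB \<xi> * x powr \<mu> - \<mu> * \<xi> powr (\<mu> - 1) * FB x" by (rule DERIV_unique[OF Dl D\<phi>[OF \<xi>(1)]])
  with l0 have "\<xi> powr (\<mu> - 1) * hB \<xi> * x powr \<mu> = \<mu> * \<xi> powr (\<mu> - 1) * FB x"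
    using fBh[OF \<xi>(1)] by simp
  then have "hB \<xi> * x powr \<mu> = \<mu> * FB x" using \<xi> by (simp add: mult_ac)
  then have "FB x = x powr \<mu> * hB \<xi> / \<mu>" using mu by (simp add: field_simps)
  with \<xi> show ?thesis by blast
qed


lemma FB_ratio:
  fixes FB fB hB :: "real \<Rightarrow> real" and \<mu> H :: real
  assumes FBd: "\<And>x. x > 0 \<Longrightarrow> (FB has_real_derivative fB x) (at x)"
    and fBh: "\<And>x. x > 0 \<Longrightarrow> fB x = x powr (\<mu> - 1) * hB x"
    and FBneg: "\<And>y. y \<le> 0 \<Longrightarrow> FB y = 0"
    and FBc: "continuous (at_right 0) FB"
    and mu: "\<mu> > 0" and hc: "isCont hB 0"
    and hb: "\<And>x. x \<ge> 0 \<Longrightarrow> 0 \<le> hB x \<and> hB x \<le> H"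
  shows "((\<lambda>x. FB x / x powr \<mu>) \<longlongrightarrow> hB 0 / \<mu>) (at_right 0)"
    and "\<And>x. x > 0 \<Longrightarrow> 0 \<le> FB x / x powr \<mu> \<and> FB x / x powr \<mu> \<le> H / \<mu>"
proof -
  define \<xi> where "\<xi> x = (SOME \<xi>. 0 < \<xi> \<and> \<xi> < x \<and> FB x = x powr \<mu> * hB \<xi> / \<mu>)" for x
  have \<xi>: "0 < \<xi> x \<and> \<xi> x < x \<and> FB x = x powr \<mu> * hB (\<xi> x) / \<mu>" if "x > 0" for x
    unfolding \<xi>_def by (rule someI_ex, rule FB_mvt[OF FBd fBh FBneg FBc mu that]) auto
  have eq: "FB x / x powr \<mu> = hB (\<xi> x) / \<mu>" if "x > 0" for x
    using \<xi>[OF that] that by simp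
  show "0 \<le> FB x / x powr \<mu> \<and> FB x / x powr \<mu> \<le> H / \<mu>" if "x > 0" for x
    using eq[OF that] hb[of "\<xi> x"] \<xi>[OF that] mu by (simp add: divide_right_mono)
  have "(\<xi> \<longlongrightarrow> 0) (at_right 0)"
  proof (rule tendsto_sandwich[of "\<lambda>_. 0" _ _ "\<lambda>x. x"])
    show "\<forall>\<^sub>F x in at_right 0. 0 \<le> \<xi> x" "\<forall>\<^sub>F x in at_right 0. \<xi> x \<le> x"
      using \<xi> by (auto simp: eventually_at_right_less intro!: eventually_mono[OF eventually_at_right_less] less_imp_le)
  qed (auto intro: tendsto_ident_at)
  then have "((\<lambda>x. hB (\<xi> x)) \<longlongrightarrow> hB 0) (at_right 0)" by (rule isCont_tendsto_compose[OF hc])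
  then have "((\<lambda>x. hB (\<xi> x) / \<mu>) \<longlongrightarrow> hB 0 / \<mu>) (at_right 0)" using mu by (intro tendsto_intros) auto
  then show "((\<lambda>x. FB x / x powr \<mu>) \<longlongrightarrow> hB 0 / \<mu>) (at_right 0)"
    by (rule Lim_transform_eventually)
       (auto simp: eq intro!: eventually_mono[OF eventually_at_right_less])
qed


lemma powr_between_bound:
  fixes \<mu> z0 t :: real
  assumes z0: "z0 > 0" and t: "z0 / 2 \<le> t" "t \<le> 2 * z0"
  shows "t powr (\<mu> - 1) \<le> max ((z0/2) powr (\<mu> - 1)) ((2*z0) powr (\<mu> - 1))"
proof (cases "\<mu> - 1 \<ge> 0")
  case True
  then have "t powr (\<mu> - 1) \<le> (2*z0) powr (\<mu> - 1)" using t z0 by (intro powr_mono2) auto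
  then show ?thesis by linarith
next
  case False
  then have "t powr (\<mu> - 1) \<le> (z0/2) powr (\<mu> - 1)" using t z0 by (intro powr_mono2') auto
  then show ?thesis by linarith
qed

lemma FB_lip:
  fixes FB fB hB :: "real \<Rightarrow> real" and \<mu> H z0 z s :: real
  assumes FBd: "\<And>x. x > 0 \<Longrightarrow> (FB has_real_derivative fB x) (at x)"
    and fBh: "\<And>x. x > 0 \<Longrightarrow> fB x = x powr (\<mu> - 1) * hB x"
    and hb: "\<And>x. x \<ge> 0 \<Longrightarrow> 0 \<le> hB x \<and> hB x \<le> H"
    and z0: "z0 > 0" and s: "s > 0" and z: "z0 / 2 \<le> z" "z \<le> 2 * z0"
  shows "\<bar>FB (z * s) - FB (z0 * s)\<bar> \<le> \<bar>z - z0\<bar> * (s powr \<mu> * (H * max ((z0/2) powr (\<mu> - 1)) ((2*z0) powr (\<mu> - 1))))"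
proof (cases "z = z0")
  case True then show ?thesis using hb[of 0] by simp
next
  case False
  define lo where "lo = min z z0"
  define hi where "hi = max z z0"
  have lohi: "lo < hi" "z0/2 \<le> lo" "hi \<le> 2*z0" "lo > 0" using False z z0 unfolding lo_def hi_def by auto
  have "lo * s < hi * s" using lohi s by simp
  from MVT2[OF this, of FB fB] obtain \<xi> where \<xi>: "lo * s < \<xi>" "\<xi> < hi * s"
    and e: "FB (hi * s) - FB (lo * s) = (hi * s - lo * s) * fB \<xi>"
    using FBd lohi s by (metis mult_pos_pos order_less_le_trans)
  have \<xi>0: "\<xi> > 0" using \<xi> lohi s by (smt (verit) mult_pos_pos)
  define t where "t = \<xi> / s"
  have \<xi>t: "\<xi> = t * s" unfolding t_def using s by simp
  have tb: "z0/2 \<le> t" "t \<le> 2*z0" using \<xi> lohi s unfolding \<xi>t by auto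
  have "fB \<xi> = (t * s) powr (\<mu> - 1) * hB \<xi>" using fBh[OF \<xi>0] \<xi>t by simp
  also have "\<dots> = t powr (\<mu> - 1) * s powr (\<mu> - 1) * hB \<xi>"
    using tb z0 s by (simp add: powr_mult)
  also have "\<dots> \<le> max ((z0/2) powr (\<mu> - 1)) ((2*z0) powr (\<mu> - 1)) * s powr (\<mu> - 1) * H"
  proof -
    have mz0: "0 \<le> max ((z0/2) powr (\<mu> - 1)) ((2*z0) powr (\<mu> - 1))" by (simp add: le_max_iff_disj)
    show ?thesis
      using hb[of \<xi>] \<xi>0 powr_between_bound[OF z0 tb, of \<mu>] mz0 by (intro mult_mono) auto
  qed
  finally have fle: "fB \<xi> \<le> max ((z0/2) powr (\<mu> - 1)) ((2*z0) powr (\<mu> - 1)) * s powr (\<mu> - 1) * H" .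
  have fnn: "0 \<le> fB \<xi>" using fBh[OF \<xi>0] hb[of \<xi>] \<xi>0 by simp
  have "\<bar>FB (z * s) - FB (z0 * s)\<bar> = \<bar>FB (hi * s) - FB (lo * s)\<bar>"
    unfolding lo_def hi_def by (cases "z \<le> z0") (auto simp: max_def min_def)
  also have "\<dots> = \<bar>(hi * s - lo * s) * fB \<xi>\<bar>" by (simp only: e)
  also have "\<dots> = (hi - lo) * s * fB \<xi>"
  proof -
    have "0 \<le> (hi * s - lo * s) * fB \<xi>" using lohi s fnn by simp
    then show ?thesis by (simp add: algebra_simps)
  qed
  also have "hi - lo = \<bar>z - z0\<bar>" unfolding lo_def hi_def by auto
  also have "\<bar>z - z0\<bar> * s * fB \<xi> \<le> \<bar>z - z0\<bar> * s * (max ((z0/2) powr (\<mu> - 1)) ((2*z0) powr (\<mu> - 1)) * s powr (\<mu> - 1) * H)"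
    using fle s by (intro mult_left_mono) auto
  also have "\<dots> = \<bar>z - z0\<bar> * ((s * s powr (\<mu> - 1)) * (H * max ((z0/2) powr (\<mu> - 1)) ((2*z0) powr (\<mu> - 1))))"
    by (simp add: mult_ac)
  also have "s * s powr (\<mu> - 1) = s powr \<mu>" using s by (simp add: powr_mult_base)
  finally show ?thesis .
qed


lemma core_deriv:
  fixes Q :: "real measure" and FB fB hB :: "real \<Rightarrow> real" and \<mu> H z0 :: real
  assumes Q: "prob_space Q" and sQ: "sets Q = sets borel"
    and pos: "AE s in Q. s > 0" and mom: "integrable Q (\<lambda>s. s powr \<mu>)"
    and FBd: "\<And>x. x > 0 \<Longrightarrow> (FB has_real_derivative fB x) (at x)"
    and fBh: "\<And>x. x > 0 \<Longrightarrow> fB x = x powr (\<mu> - 1) * hB x"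
    and hb: "\<And>x. x \<ge> 0 \<Longrightarrow> 0 \<le> hB x \<and> hB x \<le> H"
    and FBm[measurable]: "FB \<in> borel_measurable borel" and fBm[measurable]: "fB \<in> borel_measurable borel"
    and FBb: "\<And>x. 0 \<le> FB x \<and> FB x \<le> 1"
    and z0: "z0 > 0"
  shows "((\<lambda>z. \<integral>s. FB (z * s) \<partial>Q) has_real_derivative (\<integral>s. s * fB (z0 * s) \<partial>Q)) (at z0)"
proof -
  interpret prob_space Q by (rule Q)
  have bmQ: "borel_measurable Q = borel_measurable borel" by (rule measurable_cong_sets[OF sQ refl])
  define L where "L = H * max ((z0/2) powr (\<mu> - 1)) ((2*z0) powr (\<mu> - 1))"
  have intFB: "integrable Q (\<lambda>s. FB (z * s))" for z
  proof (rule Bochner_Integration.integrable_bound[of _ "\<lambda>_. 1::real"])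
    show "integrable Q (\<lambda>_. 1::real)" by simp
    show "(\<lambda>s. FB (z * s)) \<in> borel_measurable Q" unfolding bmQ by measurable
    show "AE s in Q. norm (FB (z * s)) \<le> norm (1::real)" using FBb by (intro AE_I2) (simp add: abs_of_nonneg)
  qed
  have key: "((\<lambda>z. \<integral>s. (FB (z * s) - FB (z0 * s)) / (z - z0) \<partial>Q) \<longlongrightarrow> (\<integral>s. s * fB (z0 * s) \<partial>Q)) (at z0)"
  proof (rule dom_conv_at[where w="\<lambda>s. s powr \<mu> * L"])
    show "(\<lambda>s. (FB (z * s) - FB (z0 * s)) / (z - z0)) \<in> borel_measurable Q" for z
      unfolding bmQ by measurable
    show "(\<lambda>s. s * fB (z0 * s)) \<in> borel_measurable Q" unfolding bmQ by measurable
    show "integrable Q (\<lambda>s. s powr \<mu> * L)" using mom by simp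
    show "AE s in Q. ((\<lambda>z. (FB (z * s) - FB (z0 * s)) / (z - z0)) \<longlongrightarrow> s * fB (z0 * s)) (at z0)"
      using pos
    proof eventually_elim
      fix s :: real assume s: "s > 0"
      have "((\<lambda>z. FB (z * s)) has_real_derivative fB (z0 * s) * s) (at z0)"
        by (rule DERIV_chain2[OF FBd]) (use s z0 in \<open>auto intro!: derivative_eq_intros\<close>)
      then show "((\<lambda>z. (FB (z * s) - FB (z0 * s)) / (z - z0)) \<longlongrightarrow> s * fB (z0 * s)) (at z0)"
        unfolding has_field_derivative_iff by (simp add: mult.commute)
    qed
    have ev: "eventually (\<lambda>z. z0/2 \<le> z \<and> z \<le> 2 * z0 \<and> z \<noteq> z0) (at z0)"
      unfolding eventually_at
      by (rule exI[of _ "z0/2"]) (use z0 in \<open>auto simp: dist_real_def abs_if split: if_splits\<close>)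
    show "\<forall>\<^sub>F z in at z0. AE s in Q. norm ((FB (z * s) - FB (z0 * s)) / (z - z0)) \<le> s powr \<mu> * L"
      using ev
    proof eventually_elim
      fix z assume z: "z0/2 \<le> z \<and> z \<le> 2 * z0 \<and> z \<noteq> z0"
      show "AE s in Q. norm ((FB (z * s) - FB (z0 * s)) / (z - z0)) \<le> s powr \<mu> * L"
        using pos
      proof eventually_elim
        fix s :: real assume s: "s > 0"
        have "\<bar>FB (z * s) - FB (z0 * s)\<bar> \<le> \<bar>z - z0\<bar> * (s powr \<mu> * L)"
          unfolding L_def by (rule FB_lip[OF FBd fBh hb z0 s]) (use z in auto)
        moreover have "\<bar>z - z0\<bar> > 0" using z by simp
        ultimately show "norm ((FB (z * s) - FB (z0 * s)) / (z - z0)) \<le> s powr \<mu> * L"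
          by (simp add: abs_divide divide_le_eq mult.commute)
      qed
    qed
  qed
  show ?thesis
    unfolding has_field_derivative_iff
  proof (rule Lim_transform_eventually[OF key])
    show "\<forall>\<^sub>F z in at z0. (\<integral>s. (FB (z * s) - FB (z0 * s)) / (z - z0) \<partial>Q) =
        ((\<integral>s. FB (z * s) \<partial>Q) - (\<integral>s. FB (z0 * s) \<partial>Q)) / (z - z0)"
      by (intro always_eventually allI)
         (simp add: Bochner_Integration.integral_diff[OF intFB intFB])
  qed
qed


lemma core_limit:
  fixes Q :: "real measure" and FB fB hB :: "real \<Rightarrow> real" and \<mu> H :: real
  assumes Q: "prob_space Q" and sQ: "sets Q = sets borel"
    and pos: "AE s in Q. s > 0" and mom: "integrable Q (\<lambda>s. s powr \<mu>)"
    and FBd: "\<And>x. x > 0 \<Longrightarrow> (FB has_real_derivative fB x) (at x)"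
    and fBh: "\<And>x. x > 0 \<Longrightarrow> fB x = x powr (\<mu> - 1) * hB x"
    and FBneg: "\<And>y. y \<le> 0 \<Longrightarrow> FB y = 0"
    and FBc: "continuous (at_right 0) FB"
    and mu: "\<mu> > 0" and hc: "isCont hB 0" and h0: "hB 0 > 0"
    and hb: "\<And>x. x \<ge> 0 \<Longrightarrow> 0 \<le> hB x \<and> hB x \<le> H"
    and FBm[measurable]: "FB \<in> borel_measurable borel" and fBm[measurable]: "fB \<in> borel_measurable borel"
    and hBm[measurable]: "hB \<in> borel_measurable borel"
  shows "((\<lambda>z. z * (\<integral>s. s * fB (z * s) \<partial>Q) / (\<integral>s. FB (z * s) \<partial>Q)) \<longlongrightarrow> \<mu>) (at_right 0)"
proof -
  interpret prob_space Q by (rule Q)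
  have bmQ: "borel_measurable Q = borel_measurable borel" by (rule measurable_cong_sets[OF sQ refl])
  define I where "I = (\<integral>s. s powr \<mu> \<partial>Q)"
  have I: "I > 0"
  proof -
    have nn: "AE s in Q. 0 \<le> s powr \<mu>" by simp
    have "I \<noteq> 0"
    proof
      assume "I = 0"
      then have "AE s in Q. s powr \<mu> = 0" unfolding I_def using integral_nonneg_eq_0_iff_AE[OF mom nn] by simp
      with pos have "AE s in Q. False" by eventually_elim simp
      then show False by (simp add: AE_False)
    qed
    moreover have "I \<ge> 0" unfolding I_def by (intro integral_nonneg_AE nn)
    ultimately show ?thesis by simp
  qed
  define K where "K x = FB x / x powr \<mu>" for x
  note Kr = FB_ratio[OF FBd fBh FBneg FBc mu hc hb]
  have H0: "H \<ge> 0" using hb[of 0] by simp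
  have eR: "eventually (\<lambda>z. z > 0) (at_right (0::real))" by (simp add: eventually_at_right_less)
  have A: "((\<lambda>z. \<integral>s. s powr \<mu> * hB (z * s) \<partial>Q) \<longlongrightarrow> (\<integral>s. s powr \<mu> * hB 0 \<partial>Q)) (at_right 0)"
  proof (rule dom_conv_at[where w="\<lambda>s. s powr \<mu> * H"])
    show "(\<lambda>s. s powr \<mu> * hB (z * s)) \<in> borel_measurable Q" for z unfolding bmQ by measurable
    show "(\<lambda>s. s powr \<mu> * hB 0) \<in> borel_measurable Q" unfolding bmQ by measurable
    show "integrable Q (\<lambda>s. s powr \<mu> * H)" using mom by simp
    show "AE s in Q. ((\<lambda>z. s powr \<mu> * hB (z * s)) \<longlongrightarrow> s powr \<mu> * hB 0) (at_right 0)"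
    proof (intro AE_I2 tendsto_mult tendsto_const)
      fix s :: real
      have "((\<lambda>z. z * s) \<longlongrightarrow> 0 * s) (at_right 0)" by (intro tendsto_intros)
      then show "((\<lambda>z. hB (z * s)) \<longlongrightarrow> hB 0) (at_right 0)"
        using isCont_tendsto_compose[OF hc] by simp
    qed
    show "\<forall>\<^sub>F z in at_right 0. AE s in Q. norm (s powr \<mu> * hB (z * s)) \<le> s powr \<mu> * H"
      using eR
    proof eventually_elim
      fix z :: real assume z: "z > 0"
      show "AE s in Q. norm (s powr \<mu> * hB (z * s)) \<le> s powr \<mu> * H"
        using pos
      proof eventually_elim
        fix s :: real assume s: "s > 0"
        then show "norm (s powr \<mu> * hB (z * s)) \<le> s powr \<mu> * H"
          using hb[of "z * s"] z by (simp add: abs_mult mult_left_mono)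
      qed
    qed
  qed
  have B: "((\<lambda>z. \<integral>s. s powr \<mu> * K (z * s) \<partial>Q) \<longlongrightarrow> (\<integral>s. s powr \<mu> * (hB 0 / \<mu>) \<partial>Q)) (at_right 0)"
  proof (rule dom_conv_at[where w="\<lambda>s. s powr \<mu> * (H / \<mu>)"])
    show "(\<lambda>s. s powr \<mu> * K (z * s)) \<in> borel_measurable Q" for z unfolding bmQ K_def by measurable
    show "(\<lambda>s. s powr \<mu> * (hB 0 / \<mu>)) \<in> borel_measurable Q" unfolding bmQ by measurable
    show "integrable Q (\<lambda>s. s powr \<mu> * (H / \<mu>))" using mom by simp
    show "AE s in Q. ((\<lambda>z. s powr \<mu> * K (z * s)) \<longlongrightarrow> s powr \<mu> * (hB 0 / \<mu>)) (at_right 0)"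
      using pos
    proof eventually_elim
      fix s :: real assume s: "s > 0"
      have F: "filterlim (\<lambda>z. z * s) (at_right 0) (at_right 0)"
        unfolding filterlim_at
      proof
        show "\<forall>\<^sub>F z in at_right 0. z * s \<in> {0<..} \<and> z * s \<noteq> 0"
          using eR by eventually_elim (use s in auto)
        have "((\<lambda>z. z * s) \<longlongrightarrow> 0 * s) (at_right 0)" by (intro tendsto_intros)
        then show "((\<lambda>z. z * s) \<longlongrightarrow> 0) (at_right 0)" by simp
      qed
      have "((\<lambda>z. K (z * s)) \<longlongrightarrow> hB 0 / \<mu>) (at_right 0)"
        unfolding K_def by (rule filterlim_compose[OF Kr(1) F])
      then show "((\<lambda>z. s powr \<mu> * K (z * s)) \<longlongrightarrow> s powr \<mu> * (hB 0 / \<mu>)) (at_right 0)"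
        by (intro tendsto_intros)
    qed
    show "\<forall>\<^sub>F z in at_right 0. AE s in Q. norm (s powr \<mu> * K (z * s)) \<le> s powr \<mu> * (H / \<mu>)"
      using eR
    proof eventually_elim
      fix z :: real assume z: "z > 0"
      show "AE s in Q. norm (s powr \<mu> * K (z * s)) \<le> s powr \<mu> * (H / \<mu>)"
        using pos
      proof eventually_elim
        fix s :: real assume s: "s > 0"
        have k: "0 \<le> K (z * s) \<and> K (z * s) \<le> H / \<mu>" using Kr(2)[of "z * s"] z s unfolding K_def by simp
        have "norm (s powr \<mu> * K (z * s)) = s powr \<mu> * K (z * s)" using k by simp
        also have "\<dots> \<le> s powr \<mu> * (H / \<mu>)" using k by (intro mult_left_mono) auto
        finally show "norm (s powr \<mu> * K (z * s)) \<le> s powr \<mu> * (H / \<mu>)" .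
      qed
    qed
  qed
  have eA: "z * (\<integral>s. s * fB (z * s) \<partial>Q) = z powr \<mu> * (\<integral>s. s powr \<mu> * hB (z * s) \<partial>Q)" if z: "z > 0" for z
  proof -
    have "z * (\<integral>s. s * fB (z * s) \<partial>Q) = (\<integral>s. z * (s * fB (z * s)) \<partial>Q)" by simp
    also have "\<dots> = (\<integral>s. z powr \<mu> * (s powr \<mu> * hB (z * s)) \<partial>Q)"
    proof (rule integral_cong_AE)
      show "(\<lambda>s. z * (s * fB (z * s))) \<in> borel_measurable Q" unfolding bmQ by measurable
      show "(\<lambda>s. z powr \<mu> * (s powr \<mu> * hB (z * s))) \<in> borel_measurable Q" unfolding bmQ by measurable
      show "AE s in Q. z * (s * fB (z * s)) = z powr \<mu> * (s powr \<mu> * hB (z * s))"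
        using pos
      proof eventually_elim
        fix s :: real assume s: "s > 0"
        have "z * (s * fB (z * s)) = (z * s) * (z * s) powr (\<mu> - 1) * hB (z * s)"
          using fBh[of "z * s"] z s by (simp add: mult_ac)
        also have "\<dots> = (z * s) powr \<mu> * hB (z * s)" using z s by (simp add: powr_mult_base)
        also have "\<dots> = z powr \<mu> * (s powr \<mu> * hB (z * s))" using z s by (simp add: powr_mult mult_ac)
        finally show "z * (s * fB (z * s)) = z powr \<mu> * (s powr \<mu> * hB (z * s))" .
      qed
    qed
    also have "\<dots> = z powr \<mu> * (\<integral>s. s powr \<mu> * hB (z * s) \<partial>Q)" by simp
    finally show ?thesis .
  qed
  have eB: "(\<integral>s. FB (z * s) \<partial>Q) = z powr \<mu> * (\<integral>s. s powr \<mu> * K (z * s) \<partial>Q)" if z: "z > 0" for z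
  proof -
    have "(\<integral>s. FB (z * s) \<partial>Q) = (\<integral>s. z powr \<mu> * (s powr \<mu> * K (z * s)) \<partial>Q)"
    proof (rule integral_cong_AE)
      show "(\<lambda>s. FB (z * s)) \<in> borel_measurable Q" unfolding bmQ by measurable
      show "(\<lambda>s. z powr \<mu> * (s powr \<mu> * K (z * s))) \<in> borel_measurable Q" unfolding bmQ K_def by measurable
      show "AE s in Q. FB (z * s) = z powr \<mu> * (s powr \<mu> * K (z * s))"
        using pos
      proof eventually_elim
        fix s :: real assume s: "s > 0"
        have "z powr \<mu> * (s powr \<mu> * K (z * s)) = (z * s) powr \<mu> * (FB (z * s) / (z * s) powr \<mu>)"
          unfolding K_def using z s by (simp add: powr_mult mult_ac)
        also have "\<dots> = FB (z * s)" using z s by simp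
        finally show "FB (z * s) = z powr \<mu> * (s powr \<mu> * K (z * s))" by simp
      qed
    qed
    also have "\<dots> = z powr \<mu> * (\<integral>s. s powr \<mu> * K (z * s) \<partial>Q)" by simp
    finally show ?thesis .
  qed
  have lim: "((\<lambda>z. (\<integral>s. s powr \<mu> * hB (z * s) \<partial>Q) / (\<integral>s. s powr \<mu> * K (z * s) \<partial>Q))
      \<longlongrightarrow> (\<integral>s. s powr \<mu> * hB 0 \<partial>Q) / (\<integral>s. s powr \<mu> * (hB 0 / \<mu>) \<partial>Q)) (at_right 0)"
    using I h0 mu unfolding I_def by (intro tendsto_divide A B) (simp add: integral_mult_left_zero)
  have val: "(\<integral>s. s powr \<mu> * hB 0 \<partial>Q) / (\<integral>s. s powr \<mu> * (hB 0 / \<mu>) \<partial>Q) = \<mu>"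
    using I h0 mu unfolding I_def by (simp add: integral_mult_left_zero)
  show ?thesis
  proof (rule Lim_transform_eventually[OF lim[unfolded val]])
    show "\<forall>\<^sub>F z in at_right 0. (\<integral>s. s powr \<mu> * hB (z * s) \<partial>Q) / (\<integral>s. s powr \<mu> * K (z * s) \<partial>Q) =
        z * (\<integral>s. s * fB (z * s) \<partial>Q) / (\<integral>s. FB (z * s) \<partial>Q)"
      using eR
    proof eventually_elim
      fix z :: real assume z: "z > 0"
      then show "(\<integral>s. s powr \<mu> * hB (z * s) \<partial>Q) / (\<integral>s. s powr \<mu> * K (z * s) \<partial>Q) =
        z * (\<integral>s. s * fB (z * s) \<partial>Q) / (\<integral>s. FB (z * s) \<partial>Q)"
        unfolding eA[OF z] eB[OF z] by simp
    qed
  qed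
qed


lemma kms_dist_facts:
  fixes X :: "'a \<Rightarrow> real" and M :: "'a measure"
  assumes M: "prob_space M" and k: "\<kappa> \<ge> 0" and mu: "\<mu> > 0" and m: "m > 0" and xb: "xb > 0"
    and d: "distributed M lborel X (\<lambda>x. ennreal (kms_pdf \<kappa> \<mu> m xb x))"
  shows "AE \<omega> in M. X \<omega> > 0" and "\<And>p. p \<ge> 0 \<Longrightarrow> integrable M (\<lambda>\<omega>. X \<omega> powr p)"
proof -
  obtain h C \<delta> where fh: "\<And>x. kms_pdf \<kappa> \<mu> m xb x = (if x \<le> 0 then 0 else x powr (\<mu> - 1) * h x)"
    and hb: "\<And>x. x \<ge> 0 \<Longrightarrow> 0 \<le> h x \<and> h x \<le> C * exp (- \<delta> * x)"
    and "\<delta> > 0" "C > 0"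
    by (rule kms_struct[OF k mu m xb]) blast
  note kv = kms_var_facts[OF M d fh hb mu \<open>\<delta> > 0\<close> \<open>C > 0\<close>]
  show "AE \<omega> in M. X \<omega> > 0" by (rule kv(1))
  show "\<And>p. p \<ge> 0 \<Longrightarrow> integrable M (\<lambda>\<omega>. X \<omega> powr p)" by (rule kv(2))
qed

lemma sum_powr_bound:
  fixes c :: "nat \<Rightarrow> real" and J :: "nat set" and \<mu> :: real
  assumes J: "finite J" "J \<noteq> {}" and c: "\<And>j. j \<in> J \<Longrightarrow> c j > 0" and mu: "\<mu> > 0"
  shows "(\<Sum>j\<in>J. c j) powr \<mu> \<le> real (card J) powr \<mu> * (\<Sum>j\<in>J. c j powr \<mu>)"
proof -
  define mx where "mx = Max (c ` J)"
  have "mx \<in> c ` J" unfolding mx_def using J by (intro Max_in) auto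
  then obtain j0 where j0: "j0 \<in> J" "mx = c j0" by blast
  have "(\<Sum>j\<in>J. c j) \<le> (\<Sum>j\<in>J. mx)" unfolding mx_def using J by (intro sum_mono) auto
  also have "\<dots> = real (card J) * mx" by simp
  finally have le: "(\<Sum>j\<in>J. c j) \<le> real (card J) * mx" .
  have sp: "(\<Sum>j\<in>J. c j) > 0" using J c by (intro sum_pos) auto
  have "(\<Sum>j\<in>J. c j) powr \<mu> \<le> (real (card J) * mx) powr \<mu>" using sp le mu by (intro powr_mono2) auto
  also have "\<dots> = real (card J) powr \<mu> * mx powr \<mu>" using j0 c by (simp add: powr_mult less_imp_le)
  also have "mx powr \<mu> \<le> (\<Sum>j\<in>J. c j powr \<mu>)" unfolding j0(2)
    using J j0 by (intro member_le_sum) auto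
  then have "real (card J) powr \<mu> * mx powr \<mu> \<le> real (card J) powr \<mu> * (\<Sum>j\<in>J. c j powr \<mu>)"
    by (intro mult_left_mono) auto
  finally show ?thesis .
qed


theorem mainTheorem2:
  fixes M :: "'a measure"
    and N :: nat
    and B :: "'a \<Rightarrow> real" and C :: "nat \<Rightarrow> 'a \<Rightarrow> real"
    and \<kappa> \<mu> m xb :: real
    and \<kappa>j \<mu>j mj xbj :: "nat \<Rightarrow> real"
    and g :: "real \<Rightarrow> real"
  assumes "prob_space M"
    and "N \<ge> 1"
    and "\<kappa> \<ge> 0" "\<mu> > 0" "m > 0" "xb > 0"
    and "\<And>j. j \<in> {1..N} \<Longrightarrow> \<kappa>j j \<ge> 0 \<and> \<mu>j j > 0 \<and> mj j > 0 \<and> xbj j > 0"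
    and "distributed M lborel B (\<lambda>x. ennreal (kms_pdf \<kappa> \<mu> m xb x))"
    and "\<And>j. j \<in> {1..N} \<Longrightarrow>
           distributed M lborel (C j) (\<lambda>x. ennreal (kms_pdf (\<kappa>j j) (\<mu>j j) (mj j) (xbj j) x))"
    and "prob_space.indep_vars M (\<lambda>_. borel) (\<lambda>i. if i = 0 then B else C i) {0..N}"
    and "distributed M lborel (\<lambda>\<omega>. B \<omega> / (\<Sum>j=1..N. C j \<omega>)) (\<lambda>z. ennreal (g z))"
    and "\<And>z. 0 \<le> g z"
    and "continuous_on {0<..} g"
  shows "((\<lambda>z. z * g z / measure M {\<omega> \<in> space M. B \<omega> / (\<Sum>j=1..N. C j \<omega>) \<le> z})
           \<longlongrightarrow> \<mu>) (at_right 0)"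
proof -
  note Mps = assms(1)
  interpret prob_space M by (rule Mps)
  note dB = assms(8) and dC = assms(9) and ind = assms(10) and dG = assms(11) and gnn = assms(12)
    and gc = assms(13)
  define S where "S \<omega> = (\<Sum>j=1..N. C j \<omega>)" for \<omega>
  define fB where "fB = kms_pdf \<kappa> \<mu> m xb"
  define FB where "FB x = measure M {\<omega>\<in>space M. B \<omega> \<le> x}" for x
  define F where "F z = measure M {\<omega>\<in>space M. B \<omega> / S \<omega> \<le> z}" for z
  obtain hB CB \<delta>B where fh: "\<And>x. fB x = (if x \<le> 0 then 0 else x powr (\<mu> - 1) * hB x)"
    and hBc: "\<And>x. isCont hB x"
    and hbB: "\<And>x. x \<ge> 0 \<Longrightarrow> 0 \<le> hB x \<and> hB x \<le> CB * exp (- \<delta>B * x)"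
    and h0: "hB 0 > 0" and \<delta>B: "\<delta>B > 0" and CB: "CB > 0"
    unfolding fB_def by (rule kms_struct[OF assms(3-6)]) blast
  have fBnn: "0 \<le> fB x" for x using hbB[of x] by (auto simp: fh)
  have Bm[measurable]: "B \<in> borel_measurable M" using distributed_measurable[OF dB] by simp
  have Cm[measurable]: "C j \<in> borel_measurable M" if "j \<in> {1..N}" for j
    using distributed_measurable[OF dC[OF that]] by simp
  have Sm[measurable]: "S \<in> borel_measurable M" unfolding S_def by (intro borel_measurable_sum) (use Cm in auto)
  have Bpos: "AE \<omega> in M. B \<omega> > 0"
    using kms_dist_facts(1)[OF Mps assms(3-6) dB] .
  have Cfacts: "(AE \<omega> in M. C j \<omega> > 0) \<and> integrable M (\<lambda>\<omega>. C j \<omega> powr \<mu>)" if j: "j \<in> {1..N}" for j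
    using kms_dist_facts[OF Mps _ _ _ _ dC[OF j]] assms(7)[OF j] assms(4) by auto
  have Cpos: "AE \<omega> in M. \<forall>j\<in>{1..N}. C j \<omega> > 0"
    using Cfacts by (subst AE_finite_all) auto
  have Spos: "AE \<omega> in M. S \<omega> > 0"
    using Cpos by eventually_elim (use assms(2) in \<open>auto simp: S_def intro!: sum_pos\<close>)
  have Smom: "integrable M (\<lambda>\<omega>. S \<omega> powr \<mu>)"
  proof (rule Bochner_Integration.integrable_bound[of _ "\<lambda>\<omega>. real N powr \<mu> * (\<Sum>j\<in>{1..N}. C j \<omega> powr \<mu>)"])
    show "integrable M (\<lambda>\<omega>. real N powr \<mu> * (\<Sum>j\<in>{1..N}. C j \<omega> powr \<mu>))"
      using Cfacts by (intro integrable_mult_right Bochner_Integration.integrable_sum) auto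
    show "(\<lambda>\<omega>. S \<omega> powr \<mu>) \<in> borel_measurable M" by measurable
    show "AE \<omega> in M. norm (S \<omega> powr \<mu>) \<le> norm (real N powr \<mu> * (\<Sum>j\<in>{1..N}. C j \<omega> powr \<mu>))"
      using Cpos
    proof eventually_elim
      fix \<omega> assume c: "\<forall>j\<in>{1..N}. C j \<omega> > 0"
      have "S \<omega> powr \<mu> \<le> real (card {1..N}) powr \<mu> * (\<Sum>j\<in>{1..N}. C j \<omega> powr \<mu>)"
        unfolding S_def using c assms(2,4) by (intro sum_powr_bound) auto
      moreover have "0 \<le> (\<Sum>j\<in>{1..N}. C j \<omega> powr \<mu>)" by (intro sum_nonneg) auto
      ultimately show "norm (S \<omega> powr \<mu>) \<le> norm (real N powr \<mu> * (\<Sum>j\<in>{1..N}. C j \<omega> powr \<mu>))"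
        by simp
    qed
  qed
  define Q where "Q = distr M borel S"
  have Qps: "prob_space Q" unfolding Q_def by (rule prob_space_distr) simp
  have sQ: "sets Q = sets borel" unfolding Q_def by simp
  have Qpos: "AE s in Q. s > 0" unfolding Q_def using Spos by (subst AE_distr_iff) auto
  have Qmom: "integrable Q (\<lambda>s. s powr \<mu>)" unfolding Q_def using Smom by (subst integrable_distr_eq) auto
  have dB': "distributed M lborel B (\<lambda>x. ennreal (fB x))" using dB unfolding fB_def .
  have hBcon: "continuous_on A hB" for A using hBc by (intro continuous_at_imp_continuous_on) auto
  have FBd: "(FB has_real_derivative fB x) (at x)" if x: "x > 0" for x
  proof -
    have "continuous_on {x/2..2*x} (\<lambda>y. y powr (\<mu> - 1) * hB y)"
      using x by (intro continuous_intros hBcon) auto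
    then have "continuous_on {x/2..2*x} fB"
      by (rule continuous_on_cong[THEN iffD1, rotated 2]) (use x in \<open>auto simp: fh\<close>)
    then show ?thesis unfolding FB_def using x by (intro cdf_deriv[OF Mps dB' fBnn, of "x/2" x "2*x"]) auto
  qed
  have fBh: "fB x = x powr (\<mu> - 1) * hB x" if "x > 0" for x using that by (simp add: fh)
  have FBneg: "FB y = 0" if "y \<le> 0" for y
  proof -
    have "AE \<omega> in M. \<not> B \<omega> \<le> y" using Bpos by eventually_elim (use that in auto)
    then show ?thesis unfolding FB_def by (rule prob_eq_0_AE)
  qed
  have PBps: "prob_space (distr M borel B)" by (rule prob_space_distr) simp
  interpret PP: prob_space "distr M borel B" by (rule PBps)
  interpret PB: finite_borel_measure "distr M borel B"
    by (rule finite_borel_measure.intro[OF PP.finite_measure_axioms])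
       (rule finite_borel_measure_axioms.intro, simp)
  have FBcdf: "FB = cdf (distr M borel B)"
  proof
    fix x
    have "cdf (distr M borel B) x = measure M (B -` {..x} \<inter> space M)"
      unfolding cdf_def by (rule measure_distr[OF Bm]) simp
    also have "B -` {..x} \<inter> space M = {\<omega>\<in>space M. B \<omega> \<le> x}" by auto
    finally show "FB x = cdf (distr M borel B) x" unfolding FB_def by simp
  qed
  have FBc: "continuous (at_right 0) FB" unfolding FBcdf by (rule PB.cdf_is_right_cont)
  have FBmono: "mono FB" unfolding FBcdf mono_def by (intro allI impI PB.cdf_nondecreasing)
  have FBm: "FB \<in> borel_measurable borel" by (rule borel_measurable_mono[OF FBmono])
  have fBm: "fB \<in> borel_measurable borel" using distributed_real_measurable[OF _ dB'] fBnn by simp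
  have hBm: "hB \<in> borel_measurable borel" by (rule borel_measurable_continuous_onI[OF hBcon])
  have hb: "0 \<le> hB x \<and> hB x \<le> CB" if "x \<ge> 0" for x
  proof -
    have "exp (- \<delta>B * x) \<le> 1" using that \<delta>B by simp
    then have "CB * exp (- \<delta>B * x) \<le> CB" using CB by (simp add: mult_left_le)
    then show ?thesis using hbB[OF that] by simp
  qed
  have FBb: "0 \<le> FB x \<and> FB x \<le> 1" for x unfolding FB_def by simp
  have iv: "indep_var borel B borel S"
  proof -
    let ?X = "\<lambda>i. if i = 0 then B else C i"
    have "{0..N} = insert 0 {1..N}" by auto
    with ind have "indep_vars (\<lambda>_. borel) ?X (insert 0 {1..N})" by simp
    from indep_vars_sum[OF _ _ this] have "indep_var borel (?X 0) borel (\<lambda>\<omega>. \<Sum>i\<in>{1..N}. ?X i \<omega>)" by simp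
    moreover have "(\<lambda>\<omega>. \<Sum>i\<in>{1..N}. ?X i \<omega>) = S" unfolding S_def by (intro ext sum.cong) auto
    ultimately show ?thesis by simp
  qed
  have joint: "distr M borel B \<Otimes>\<^sub>M Q = distr M (borel \<Otimes>\<^sub>M borel) (\<lambda>\<omega>. (B \<omega>, S \<omega>))"
    using iv unfolding indep_var_distribution_eq Q_def by simp
  interpret PQ: pair_sigma_finite "distr M borel B" Q
    by (intro pair_sigma_finite.intro prob_space_imp_sigma_finite PBps Qps)
  have intFBz: "integrable Q (\<lambda>s. FB (z * s))" for z
  proof (rule Bochner_Integration.integrable_bound[of _ "\<lambda>_. 1::real"])
    interpret QQ: prob_space Q by (rule Qps)
    show "integrable Q (\<lambda>_. 1::real)" by simp
    show "(\<lambda>s. FB (z * s)) \<in> borel_measurable Q" unfolding Q_def using FBm by measurable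
    show "AE s in Q. norm (FB (z * s)) \<le> norm (1::real)" using FBb by (intro AE_I2) (simp add: abs_of_nonneg)
  qed
  have Feq: "F z = (\<integral>s. FB (z * s) \<partial>Q)" if z: "z > 0" for z
  proof -
    have s1: "{\<omega>\<in>space M. B \<omega> / S \<omega> \<le> z} \<in> sets M" by measurable
    have s2: "{\<omega>\<in>space M. B \<omega> \<le> z * S \<omega>} \<in> sets M" by measurable
    have "F z = measure M {\<omega>\<in>space M. B \<omega> \<le> z * S \<omega>}"
      unfolding F_def
    proof (rule finite_measure_eq_AE[OF _ s1 s2])
      show "AE \<omega> in M. (\<omega> \<in> {\<omega>\<in>space M. B \<omega> / S \<omega> \<le> z}) = (\<omega> \<in> {\<omega>\<in>space M. B \<omega> \<le> z * S \<omega>})"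
        using Spos by eventually_elim (auto simp: divide_le_eq mult.commute)
    qed
    also have "\<dots> = (\<integral>s. FB (z * s) \<partial>Q)"
    proof -
      define A where "A = {p \<in> space (borel \<Otimes>\<^sub>M borel). fst p \<le> z * (snd p :: real)}"
      have As: "A \<in> sets (borel \<Otimes>\<^sub>M borel)" unfolding A_def by measurable
      have mp: "(\<lambda>\<omega>. (B \<omega>, S \<omega>)) \<in> measurable M (borel \<Otimes>\<^sub>M borel)" by measurable
      have pre: "(\<lambda>\<omega>. (B \<omega>, S \<omega>)) -` A \<inter> space M = {\<omega>\<in>space M. B \<omega> \<le> z * S \<omega>}"
        by (auto simp: A_def space_pair_measure)
      have "emeasure M {\<omega>\<in>space M. B \<omega> \<le> z * S \<omega>} = emeasure (distr M (borel \<Otimes>\<^sub>M borel) (\<lambda>\<omega>. (B \<omega>, S \<omega>))) A"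
        unfolding emeasure_distr[OF mp As] pre ..
      also have "\<dots> = emeasure (distr M borel B \<Otimes>\<^sub>M Q) A" by (simp add: joint)
      also have "\<dots> = (\<integral>\<^sup>+s. emeasure (distr M borel B) ((\<lambda>b. (b, s)) -` A) \<partial>Q)"
        using As by (intro PQ.emeasure_pair_measure_alt2) (simp add: Q_def)
      also have "\<dots> = (\<integral>\<^sup>+s. ennreal (FB (z * s)) \<partial>Q)"
      proof (intro nn_integral_cong)
        fix s
        have "(\<lambda>b. (b, s)) -` A = {..z * s}" by (auto simp: A_def space_pair_measure)
        then have "emeasure (distr M borel B) ((\<lambda>b. (b, s)) -` A) = emeasure M (B -` {..z * s} \<inter> space M)"
          by (simp add: emeasure_distr)
        also have "B -` {..z * s} \<inter> space M = {\<omega>\<in>space M. B \<omega> \<le> z * s}" by auto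
        also have "emeasure M {\<omega>\<in>space M. B \<omega> \<le> z * s} = ennreal (FB (z * s))"
          unfolding FB_def by (simp add: emeasure_eq_measure)
        finally show "emeasure (distr M borel B) ((\<lambda>b. (b, s)) -` A) = ennreal (FB (z * s))" .
      qed
      also have "\<dots> = ennreal (\<integral>s. FB (z * s) \<partial>Q)"
        by (intro nn_integral_eq_integral intFBz AE_I2) (use FBb in auto)
      finally have "emeasure M {\<omega>\<in>space M. B \<omega> \<le> z * S \<omega>} = ennreal (\<integral>s. FB (z * s) \<partial>Q)" .
      moreover have "0 \<le> (\<integral>s. FB (z * s) \<partial>Q)" by (intro integral_nonneg_AE AE_I2) (use FBb in auto)
      ultimately show ?thesis by (simp add: emeasure_eq_measure)
    qed
    finally show ?thesis .
  qed
  have dG': "distributed M lborel (\<lambda>\<omega>. B \<omega> / S \<omega>) (\<lambda>z. ennreal (g z))"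
    using dG by (simp add: S_def)
  have gphi: "g z0 = (\<integral>s. s * fB (z0 * s) \<partial>Q)" if z0: "z0 > 0" for z0
  proof -
    have "continuous_on {z0/2..2*z0} g" by (rule continuous_on_subset[OF gc]) (use z0 in auto)
    then have D1: "(F has_real_derivative g z0) (at z0)"
      unfolding F_def using z0 by (intro cdf_deriv[OF Mps dG' gnn, of "z0/2" z0 "2*z0"]) auto
    have D0: "((\<lambda>z. \<integral>s. FB (z * s) \<partial>Q) has_real_derivative (\<integral>s. s * fB (z0 * s) \<partial>Q)) (at z0)"
      by (rule core_deriv[OF Qps sQ Qpos Qmom FBd fBh hb FBm fBm FBb z0])
    have D2: "(F has_real_derivative (\<integral>s. s * fB (z0 * s) \<partial>Q)) (at z0)"
      by (rule has_field_derivative_transform_within_open[OF D0, of "{0<..}"]) (use z0 Feq in auto)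
    show ?thesis by (rule DERIV_unique[OF D1 D2])
  qed
  have lim: "((\<lambda>z. z * (\<integral>s. s * fB (z * s) \<partial>Q) / (\<integral>s. FB (z * s) \<partial>Q)) \<longlongrightarrow> \<mu>) (at_right 0)"
    by (rule core_limit[OF Qps sQ Qpos Qmom FBd fBh FBneg FBc assms(4) hBc h0 hb FBm fBm hBm])
  show ?thesis
  proof (rule Lim_transform_eventually[OF lim])
    show "\<forall>\<^sub>F z in at_right 0. z * (\<integral>s. s * fB (z * s) \<partial>Q) / (\<integral>s. FB (z * s) \<partial>Q) =
      z * g z / measure M {\<omega> \<in> space M. B \<omega> / (\<Sum>j=1..N. C j \<omega>) \<le> z}"
    proof (rule eventually_mono[OF eventually_at_right_less])
      fix z :: real assume z: "z > 0"
      have "measure M {\<omega> \<in> space M. B \<omega> / (\<Sum>j=1..N. C j \<omega>) \<le> z} = F z"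
        unfolding F_def S_def ..
      then show "z * (\<integral>s. s * fB (z * s) \<partial>Q) / (\<integral>s. FB (z * s) \<partial>Q) =
        z * g z / measure M {\<omega> \<in> space M. B \<omega> / (\<Sum>j=1..N. C j \<omega>) \<le> z}"
        using Feq[OF z] gphi[OF z] by simp
    qed
  qed
qed

end
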